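(* Let $G$ be a graph, $\mathcal R=\{G_v: v\in V(G)\}$ a family of pairwise vertex-disjoint graphs, and let $S$ be a Grundy dominating sequence of $G\hookleftarrow\mathcal R$. Then there exists a Grundy dominating sequence $S'$ of $G\hookleftarrow\mathcal R$ such that, for every $v\in V(G)$ with $\widehat{S'}\cap V(G_v)\neq\emptyset$ and $\ell_{S'}(v)\in I_{S'}$, it holds that (1) $f_{S'}(w)\in V(G_v)$ for all $w\in V(G_v)$, and (2) $|\widehat{S'}\cap V(G_v)|=\gamma_{gr}(G_v)$.
   Context: All graphs are finite and simple; $N[v]$ denotes the closed neighborhood. The $X$-join product $G\hookleftarrow \mathcal R$ has vertex set $\bigcup_{v\in V(G)}V(G_v)$, the edges of all $G_v$, and all edges between $V(G_u)$ and $V(G_v)$ whenever $uv\in E(G)$. For a sequence $S=(v_1,\dots,v_k)$ of distinct vertices, $\widehat S=\{v_1,\dots,v_k\}$, $|S|=k$, and $PN_S(v_i)=N[v_i]\setminus\bigcup_{j<i}N[v_j]$. $S$ is a legal dominating sequence if $\widehat S$ is dominating and all $PN_S(v_i)\neq\emptyset$; a Grundy dominating sequence is a legal dominating sequence of maximum length, this length being $\gamma_{gr}$. For a legal dominating sequence $S$, the footprinter $f_S(x)$ of a vertex $x$ is the unique $v\in\widehat S$ with $x\in PN_S(v)$, and $I_S=\{v: f_S(v)=v\}$. For $v\in V(G)$ with $\widehat S\cap V(G_v)\neq\emptyset$, $\ell_S(v)$ denotes the vertex of $\widehat S\cap V(G_v)$ appearing earliest in $S$. *)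

theory Defs
  imports Main
begin

text \<open>A graph is a pair (vertex set, edge relation); edges are stored as ordered
pairs in both directions.\<close>
type_synonym 'a graph = "'a set \<times> ('a \<times> 'a) set"

definition verts :: "'a graph \<Rightarrow> 'a set" where "verts G = fst G"
definition edges :: "'a graph \<Rightarrow> ('a \<times> 'a) set" where "edges G = snd G"

definition graph :: "'a graph \<Rightarrow> bool" where
  "graph G \<longleftrightarrow> finite (verts G) \<and> edges G \<subseteq> verts G \<times> verts G
     \<and> sym (edges G) \<and> irrefl (edges G)"

definition cnbh :: "'a graph \<Rightarrow> 'a \<Rightarrow> 'a set" where
  "cnbh G v = insert v {u. (v, u) \<in> edges G}"

text \<open>Private neighbourhood of the i-th entry (0-based) of a sequence S.\<close>
definition pn :: "'a graph \<Rightarrow> 'a list \<Rightarrow> nat \<Rightarrow> 'a set" where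
  "pn G S i = cnbh G (S ! i) - (\<Union>j<i. cnbh G (S ! j))"

definition legal_dom_seq :: "'a graph \<Rightarrow> 'a list \<Rightarrow> bool" where
  "legal_dom_seq G S \<longleftrightarrow> distinct S \<and> set S \<subseteq> verts G
     \<and> (\<Union>v\<in>set S. cnbh G v) = verts G
     \<and> (\<forall>i<length S. pn G S i \<noteq> {})"

definition grundy_dom_seq :: "'a graph \<Rightarrow> 'a list \<Rightarrow> bool" where
  "grundy_dom_seq G S \<longleftrightarrow> legal_dom_seq G S
     \<and> (\<forall>S'. legal_dom_seq G S' \<longrightarrow> length S' \<le> length S)"

definition grundy_dom_num :: "'a graph \<Rightarrow> nat" where
  "grundy_dom_num G = Max {length S | S. legal_dom_seq G S}"

definition footprinter :: "'a graph \<Rightarrow> 'a list \<Rightarrow> 'a \<Rightarrow> 'a" where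
  "footprinter G S x = (THE v. \<exists>i<length S. S ! i = v \<and> x \<in> pn G S i)"

definition self_footprinters :: "'a graph \<Rightarrow> 'a list \<Rightarrow> 'a set" where
  "self_footprinters G S = {v \<in> verts G. footprinter G S v = v}"

text \<open>X-join product G \<hookleftarrow> R, with R :: 'a \<Rightarrow> 'b graph giving G_v.\<close>
definition xjoin :: "'a graph \<Rightarrow> ('a \<Rightarrow> 'b graph) \<Rightarrow> 'b graph" where
  "xjoin G R = ((\<Union>v\<in>verts G. verts (R v)),
     (\<Union>v\<in>verts G. edges (R v)) \<union>
     {(x, y). \<exists>u w. (u, w) \<in> edges G \<and> x \<in> verts (R u) \<and> y \<in> verts (R w)})"

text \<open>l_S(v): the earliest entry of S lying in V(G_v).\<close>
definition first_in :: "'b list \<Rightarrow> 'b set \<Rightarrow> 'b" where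
  "first_in S A = hd (filter (\<lambda>x. x \<in> A) S)"

end

theory Submission
  imports Defs
begin

definition dset :: "'b graph \<Rightarrow> 'b list \<Rightarrow> 'b set" where
  "dset K L = (\<Union>z\<in>set L. cnbh K z)"

lemma dset_simps[simp]: "dset K [] = {}" "dset K (z#zs) = cnbh K z \<union> dset K zs"
  "dset K (xs @ ys) = dset K xs \<union> dset K ys"
  by (auto simp: dset_def)

lemma cnbh_self: "z \<in> cnbh K z" by (simp add: cnbh_def)

fun lg :: "'b graph \<Rightarrow> 'b set \<Rightarrow> 'b list \<Rightarrow> bool" where
  "lg K A [] = True"
| "lg K A (z#zs) = (\<not> cnbh K z \<subseteq> A \<and> lg K (A \<union> cnbh K z) zs)"

lemma lg_append: "lg K A (xs @ ys) \<longleftrightarrow> lg K A xs \<and> lg K (A \<union> dset K xs) ys"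
  by (induction xs arbitrary: A) (auto simp: Un_assoc)

lemma lg_nth: "lg K A L \<longleftrightarrow> (\<forall>i<length L. \<not> cnbh K (L!i) \<subseteq> A \<union> dset K (take i L))"
proof (induction L arbitrary: A)
  case Nil then show ?case by simp
next
  case (Cons z zs)
  show ?case
    by (simp add: Cons All_less_Suc2 Un_assoc)
qed

lemma lg_mem: "lg K A L \<Longrightarrow> z \<in> set L \<Longrightarrow> \<not> cnbh K z \<subseteq> A"
  by (induction L arbitrary: A) auto

lemma lg_distinct: "lg K A L \<Longrightarrow> distinct L"
proof (induction L arbitrary: A)
  case Nil then show ?case by simp
next
  case (Cons z zs)
  then show ?case using lg_mem[of K "A \<union> cnbh K z" zs z] by auto
qed

lemma UN_take: "i \<le> length S \<Longrightarrow> (\<Union>j<i. f (S!j)) = (\<Union>z\<in>set (take i S). f z)"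
proof -
  assume "i \<le> length S"
  then have "set (take i S) = (!) S ` {0..<i}" by (simp add: nth_image)
  then show ?thesis by (auto simp: lessThan_atLeast0)
qed

lemma pn_iff: "(\<forall>i<length S. pn K S i \<noteq> {}) \<longleftrightarrow> lg K {} S"
proof -
  have "\<And>i. i < length S \<Longrightarrow> pn K S i = cnbh K (S!i) - dset K (take i S)"
    unfolding pn_def dset_def using UN_take[of _ S "cnbh K"] by simp
  then show ?thesis unfolding lg_nth by auto
qed

lemma legal_iff: "legal_dom_seq K S \<longleftrightarrow> set S \<subseteq> verts K \<and> dset K S = verts K \<and> lg K {} S"
  unfolding legal_dom_seq_def pn_iff dset_def using lg_distinct by blast

lemma fp_eq:
  assumes "w \<in> dset K S"
  shows "footprinter K S w = hd (filter (\<lambda>z. w \<in> cnbh K z) S)"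
proof -
  from assms have "\<exists>z\<in>set S. w \<in> cnbh K z" by (auto simp: dset_def)
  then obtain a x b where S: "S = a @ x # b" and wx: "w \<in> cnbh K x"
    and na: "\<forall>y\<in>set a. w \<notin> cnbh K y"
    by (rule split_list_first_propE)
  have hd: "hd (filter (\<lambda>z. w \<in> cnbh K z) S) = x" using S wx na by simp
  let ?i = "length a"
  have Si: "S ! ?i = x" "?i < length S" using S by auto
  have take: "take ?i S = a" using S by simp
  have pni: "w \<in> pn K S ?i"
    unfolding pn_def using UN_take[of ?i S "cnbh K"] Si take wx na by auto
  have uniq: "j = ?i" if "j < length S" "w \<in> pn K S j" for j
  proof (rule ccontr)
    assume "j \<noteq> ?i"
    then consider "j < ?i" | "j > ?i" by linarith
    then show False
    proof cases
      case 1
      then have "S ! j \<in> set a" using S by (simp add: nth_append)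
      then show False using that na unfolding pn_def by auto
    next
      case 2
      then show False using that wx Si unfolding pn_def by auto
    qed
  qed
  have "(THE v. \<exists>i<length S. S ! i = v \<and> w \<in> pn K S i) = x"
    apply (rule the_equality)
    using Si pni apply blast
    using Si uniq by blast
  then show ?thesis unfolding footprinter_def hd by simp
qed

fun kf :: "'b graph \<Rightarrow> 'b set \<Rightarrow> 'b set \<Rightarrow> 'b list \<Rightarrow> 'b list" where
  "kf K M A [] = []"
| "kf K M A (z#zs) = (if cnbh K z \<subseteq> A \<union> M then kf K M (A \<union> cnbh K z) zs
     else z # kf K M (A \<union> cnbh K z) zs)"

lemma kf_lg: "lg K A L \<Longrightarrow> A - M = B - M \<Longrightarrow> M \<subseteq> B \<Longrightarrow> lg K B (kf K M A L)"
proof (induction L arbitrary: A B)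
  case Nil then show ?case by simp
next
  case (Cons z zs)
  show ?case
  proof (cases "cnbh K z \<subseteq> A \<union> M")
    case True
    have "(A \<union> cnbh K z) - M = B - M" using True Cons.prems(2) by (auto simp: set_eq_iff)
    then show ?thesis using True Cons by simp
  next
    case False
    have "\<not> cnbh K z \<subseteq> B" using False Cons.prems(2,3) by (auto simp: set_eq_iff)
    moreover have "(A \<union> cnbh K z) - M = (B \<union> cnbh K z) - M" using Cons.prems(2) by (auto simp: set_eq_iff)
    moreover have "lg K (B \<union> cnbh K z) (kf K M (A \<union> cnbh K z) zs)"
      using Cons.IH[of "A \<union> cnbh K z" "B \<union> cnbh K z"] Cons.prems calculation(2) by auto
    ultimately show ?thesis using False by simp
  qed
qed

lemma kf_dom: "A - M = B - M \<Longrightarrow> M \<subseteq> B \<Longrightarrow> A \<union> dset K L \<subseteq> B \<union> dset K (kf K M A L)"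
proof (induction L arbitrary: A B)
  case Nil then show ?case by (auto simp: set_eq_iff)
next
  case (Cons z zs)
  show ?case
  proof (cases "cnbh K z \<subseteq> A \<union> M")
    case True
    have "(A \<union> cnbh K z) - M = B - M" using True Cons.prems(1) by (auto simp: set_eq_iff)
    then show ?thesis using True Cons by auto
  next
    case False
    have "(A \<union> cnbh K z) - M = (B \<union> cnbh K z) - M" using Cons.prems(1) by (auto simp: set_eq_iff)
    then show ?thesis using False Cons.IH[of "A \<union> cnbh K z" "B \<union> cnbh K z"] Cons.prems by auto
  qed
qed

lemma kf_set: "set (kf K M A L) \<subseteq> set L"
  by (induction L arbitrary: A) auto

lemma kf_mem: "z \<in> set (kf K M A L) \<Longrightarrow> \<not> cnbh K z \<subseteq> A \<union> M"
  by (induction L arbitrary: A) (auto split: if_splits)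

lemma kf_filter: "lg K A L \<Longrightarrow> (\<forall>z\<in>set L. C z \<longrightarrow> cnbh K z \<inter> M = {}) \<Longrightarrow>
  filter C (kf K M A L) = filter C L"
proof (induction L arbitrary: A)
  case Nil then show ?case by simp
next
  case (Cons z zs)
  have "C z \<Longrightarrow> \<not> cnbh K z \<subseteq> A \<union> M" using Cons.prems by auto
  then show ?case using Cons by auto
qed

lemma kf_hd: "w \<notin> A \<Longrightarrow> w \<notin> M \<Longrightarrow>
  hd (filter (\<lambda>z. w \<in> cnbh K z) (kf K M A L)) = hd (filter (\<lambda>z. w \<in> cnbh K z) L)"
proof (induction L arbitrary: A)
  case Nil then show ?case by simp
next
  case (Cons z zs)
  show ?case
  proof (cases "w \<in> cnbh K z")
    case True
    then have "\<not> cnbh K z \<subseteq> A \<union> M" using Cons.prems by auto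
    then show ?thesis using True by simp
  next
    case False
    then show ?thesis using Cons by auto
  qed
qed

lemma kf_count:
  assumes "lg K A L" "lg Q {} E" "dset Q E \<subseteq> A \<inter> M" "set E \<subseteq> M" "N \<subseteq> A" "N \<inter> M = {}"
    "\<forall>z\<in>set L. z \<in> M \<longrightarrow> cnbh K z = cnbh Q z \<union> N"
    "\<forall>z\<in>set L. z \<notin> M \<longrightarrow> cnbh K z \<inter> M \<noteq> {} \<longrightarrow> M \<subseteq> cnbh K z"
    "\<forall>z\<in>M. cnbh Q z \<subseteq> M"
  shows "\<exists>E'. lg Q {} E' \<and> set E' \<subseteq> M \<and> length E' + length (kf K M A L) = length E + length L"
  using assms
proof (induction L arbitrary: A E)
  case Nil then show ?case by auto
next
  case (Cons z zs)
  have p7: "\<forall>z\<in>set zs. z \<in> M \<longrightarrow> cnbh K z = cnbh Q z \<union> N"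
    and p8: "\<forall>z\<in>set zs. z \<notin> M \<longrightarrow> cnbh K z \<inter> M \<noteq> {} \<longrightarrow> M \<subseteq> cnbh K z"
    using Cons.prems(7,8) by auto
  have nA: "\<not> cnbh K z \<subseteq> A" and lgz: "lg K (A \<union> cnbh K z) zs" using Cons.prems by auto
  show ?case
  proof (cases "cnbh K z \<subseteq> A \<union> M")
    case False
    have "dset Q E \<subseteq> (A \<union> cnbh K z) \<inter> M" "N \<subseteq> A \<union> cnbh K z" using Cons.prems(3,5) by auto
    from Cons.IH[OF lgz Cons.prems(2) this(1) Cons.prems(4) this(2) Cons.prems(6) p7 p8 Cons.prems(9)]
    obtain E' where "lg Q {} E' \<and> set E' \<subseteq> M \<and> length E' + length (kf K M (A \<union> cnbh K z) zs) = length E + length zs"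
      by blast
    then show ?thesis using False by auto
  next
    case True
    show ?thesis
    proof (cases "z \<in> M")
      case zM: True
      have cz: "cnbh K z = cnbh Q z \<union> N" using Cons.prems(7) zM by auto
      have "\<not> cnbh Q z \<subseteq> dset Q E" using nA cz Cons.prems(3,5) by blast
      then have "lg Q {} (E @ [z])" using Cons.prems(2) by (simp add: lg_append)
      moreover have "dset Q (E @ [z]) \<subseteq> (A \<union> cnbh K z) \<inter> M"
        using Cons.prems(3,9) cz zM by auto
      moreover have "set (E @ [z]) \<subseteq> M" using Cons.prems(4) zM by auto
      ultimately obtain E' where "lg Q {} E' \<and> set E' \<subseteq> M \<and> length E' + length (kf K M (A \<union> cnbh K z) zs) = length (E @ [z]) + length zs"
        using Cons.IH[OF lgz _ _ _ _ Cons.prems(6) p7 p8 Cons.prems(9), of "E @ [z]"] Cons.prems(5) by blast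
      then show ?thesis using True by auto
    next
      case zM: False
      obtain w where w: "w \<in> cnbh K z" "w \<in> M" "w \<notin> A" using True nA by blast
      have Mz: "M \<subseteq> cnbh K z" using Cons.prems(8) zM w by auto
      have "\<not> cnbh Q w \<subseteq> dset Q E" using w Cons.prems(3) cnbh_self[of w Q] by blast
      then have "lg Q {} (E @ [w])" using Cons.prems(2) by (simp add: lg_append)
      moreover have "dset Q (E @ [w]) \<subseteq> (A \<union> cnbh K z) \<inter> M"
        using Cons.prems(3,9) Mz w by auto
      moreover have "set (E @ [w]) \<subseteq> M" using Cons.prems(4) w by auto
      ultimately obtain E' where "lg Q {} E' \<and> set E' \<subseteq> M \<and> length E' + length (kf K M (A \<union> cnbh K z) zs) = length (E @ [w]) + length zs"
        using Cons.IH[OF lgz _ _ _ _ Cons.prems(6) p7 p8 Cons.prems(9), of "E @ [w]"] Cons.prems(5) by blast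
      then show ?thesis using True by auto
    qed
  qed
qed

lemma cnbh_sub: "graph K \<Longrightarrow> z \<in> verts K \<Longrightarrow> cnbh K z \<subseteq> verts K"
  unfolding graph_def cnbh_def by auto

lemma dset_sub: "graph K \<Longrightarrow> set L \<subseteq> verts K \<Longrightarrow> dset K L \<subseteq> verts K"
  using cnbh_sub[of K] unfolding dset_def by (meson UN_least subset_iff)

lemma gdn:
  assumes "graph K"
  shows "\<exists>D. legal_dom_seq K D \<and> length D = grundy_dom_num K \<and>
    (\<forall>L. lg K {} L \<longrightarrow> set L \<subseteq> verts K \<longrightarrow> length L \<le> grundy_dom_num K)"
proof -
  let ?V = "verts K"
  have fin: "finite ?V" using assms by (simp add: graph_def)
  let ?LS = "{L. set L \<subseteq> ?V \<and> lg K {} L}"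
  have "?LS \<subseteq> {L. set L \<subseteq> ?V \<and> length L \<le> card ?V}"
  proof
    fix L assume "L \<in> ?LS"
    then have "distinct L" "set L \<subseteq> ?V" using lg_distinct by blast+
    then have "length L \<le> card ?V" using fin distinct_card card_mono by metis
    then show "L \<in> {L. set L \<subseteq> ?V \<and> length L \<le> card ?V}" using \<open>set L \<subseteq> ?V\<close> by simp
  qed
  then have finLS: "finite ?LS" using finite_lists_length_le[OF fin] finite_subset by blast
  have "[] \<in> ?LS" by simp
  define m where "m = Max (length ` ?LS)"
  have ne: "length ` ?LS \<noteq> {}" using \<open>[] \<in> ?LS\<close> by blast
  have fi: "finite (length ` ?LS)" using finLS by simp
  have "m \<in> length ` ?LS" unfolding m_def using Max_in[OF fi ne] .
  then obtain L0 where L0: "L0 \<in> ?LS" "length L0 = m" by blast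
  have mmax: "length L \<le> m" if "L \<in> ?LS" for L
    unfolding m_def using fi that by (intro Max_ge) auto
  have dom: "dset K L0 = ?V"
  proof (rule ccontr)
    assume "dset K L0 \<noteq> ?V"
    moreover have "dset K L0 \<subseteq> ?V" using dset_sub[OF assms] L0 by auto
    ultimately obtain z where z: "z \<in> ?V" "z \<notin> dset K L0" by blast
    have "lg K {} (L0 @ [z])" using L0 z cnbh_self[of z K] by (auto simp: lg_append)
    then have "L0 @ [z] \<in> ?LS" using L0 z by auto
    then show False using mmax[of "L0 @ [z]"] L0 by simp
  qed
  have leg: "legal_dom_seq K L0" using L0 dom by (simp add: legal_iff)
  have "grundy_dom_num K = m"
  proof -
    have sub: "{length S | S. legal_dom_seq K S} \<subseteq> length ` ?LS" by (auto simp: legal_iff)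
    have "Max {length S | S. legal_dom_seq K S} = m"
    proof (rule Max_eqI)
      show "finite {length S | S. legal_dom_seq K S}" using fi sub by (rule finite_subset[rotated])
      show "y \<le> m" if "y \<in> {length S | S. legal_dom_seq K S}" for y
      proof -
        from that obtain S where "y = length S" "legal_dom_seq K S" by blast
        then show ?thesis using mmax[of S] by (simp add: legal_iff)
      qed
      show "m \<in> {length S | S. legal_dom_seq K S}" using leg L0 by blast
    qed
    then show ?thesis by (simp add: grundy_dom_num_def)
  qed
  then show ?thesis using leg L0 mmax by auto
qed

locale xj =
  fixes G :: "'a graph" and R :: "'a \<Rightarrow> 'b graph"
  assumes gG: "graph G" and gR: "\<forall>v\<in>verts G. graph (R v)"
    and disj: "\<forall>u\<in>verts G. \<forall>v\<in>verts G. u \<noteq> v \<longrightarrow> verts (R u) \<inter> verts (R v) = {}"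
begin

abbreviation "H \<equiv> xjoin G R"

definition Nb :: "'a \<Rightarrow> 'b set" where
  "Nb v = (\<Union>u\<in>{u. (v,u) \<in> edges G}. verts (R u))"

lemma vH: "verts H = (\<Union>v\<in>verts G. verts (R v))"
  by (simp add: xjoin_def verts_def)

lemma eH: "edges H = (\<Union>v\<in>verts G. edges (R v)) \<union>
     {(x, y). \<exists>u w. (u, w) \<in> edges G \<and> x \<in> verts (R u) \<and> y \<in> verts (R w)}"
  by (simp add: xjoin_def edges_def)

lemma uniq: "u \<in> verts G \<Longrightarrow> v \<in> verts G \<Longrightarrow> z \<in> verts (R u) \<Longrightarrow> z \<in> verts (R v) \<Longrightarrow> u = v"
  using disj by blast

lemma eG: "(u,w) \<in> edges G \<Longrightarrow> u \<in> verts G \<and> w \<in> verts G \<and> u \<noteq> w \<and> (w,u) \<in> edges G"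
  using gG unfolding graph_def irrefl_def sym_def by blast

lemma eR: "v \<in> verts G \<Longrightarrow> (x,y) \<in> edges (R v) \<Longrightarrow> x \<in> verts (R v) \<and> y \<in> verts (R v)"
  using gR unfolding graph_def by blast

lemma cnbhH: assumes "v \<in> verts G" "z \<in> verts (R v)"
  shows "cnbh H z = cnbh (R v) z \<union> Nb v"
proof -
  have "{y. (z,y) \<in> edges H} = {y. (z,y) \<in> edges (R v)} \<union> Nb v"
  proof (intro set_eqI iffI)
    fix y assume "y \<in> {y. (z,y) \<in> edges H}"
    then have "(\<exists>v'\<in>verts G. (z,y) \<in> edges (R v')) \<or> (\<exists>u w. (u, w) \<in> edges G \<and> z \<in> verts (R u) \<and> y \<in> verts (R w))"
      unfolding eH by blast
    then show "y \<in> {y. (z,y) \<in> edges (R v)} \<union> Nb v"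
    proof
      assume "\<exists>v'\<in>verts G. (z,y) \<in> edges (R v')"
      then obtain v' where "v' \<in> verts G" "(z,y) \<in> edges (R v')" by blast
      moreover then have "v' = v" using eR uniq assms by blast
      ultimately show ?thesis by simp
    next
      assume "\<exists>u w. (u, w) \<in> edges G \<and> z \<in> verts (R u) \<and> y \<in> verts (R w)"
      then obtain u w where "(u, w) \<in> edges G" "z \<in> verts (R u)" "y \<in> verts (R w)" by blast
      moreover then have "u = v" using eG uniq assms by blast
      ultimately show ?thesis unfolding Nb_def by blast
    qed
  next
    fix y assume "y \<in> {y. (z,y) \<in> edges (R v)} \<union> Nb v"
    then show "y \<in> {y. (z,y) \<in> edges H}"
      unfolding eH Nb_def using assms by blast
  qed
  then show ?thesis unfolding cnbh_def by auto
qed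

lemma cnbhR_sub: "v \<in> verts G \<Longrightarrow> z \<in> verts (R v) \<Longrightarrow> cnbh (R v) z \<subseteq> verts (R v)"
  using gR by (simp add: cnbh_sub)

lemma Nb_iff: "y \<in> Nb v \<longleftrightarrow> (\<exists>u. (v,u) \<in> edges G \<and> y \<in> verts (R u))"
  unfolding Nb_def by blast

lemma Nb_disj: "v \<in> verts G \<Longrightarrow> Nb v \<inter> verts (R v) = {}"
  unfolding Nb_def using eG uniq by blast

lemma cross: assumes "u \<in> verts G" "v \<in> verts G" "u \<noteq> v" "z \<in> verts (R u)"
  shows "cnbh H z \<inter> verts (R v) = (if (v,u) \<in> edges G then verts (R v) else {})"
proof -
  have a: "cnbh (R u) z \<inter> verts (R v) = {}" using cnbhR_sub[OF assms(1,4)] disj assms by blast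
  have b: "Nb u \<inter> verts (R v) = (if (v,u) \<in> edges G then verts (R v) else {})"
  proof (cases "(v,u) \<in> edges G")
    case True
    then have "(u,v) \<in> edges G" using eG by blast
    then show ?thesis using True unfolding Nb_def by auto
  next
    case False
    have "Nb u \<inter> verts (R v) = {}"
    proof (rule ccontr)
      assume "Nb u \<inter> verts (R v) \<noteq> {}"
      then obtain y w where "(u,w) \<in> edges G" "y \<in> verts (R w)" "y \<in> verts (R v)" unfolding Nb_def by blast
      moreover then have "w = v" using eG uniq assms by blast
      ultimately show False using False eG by blast
    qed
    then show ?thesis using False by simp
  qed
  show ?thesis using cnbhH[OF assms(1,4)] a b by (auto split: if_splits)
qed

lemma inH: "z \<in> verts H \<Longrightarrow> \<exists>u\<in>verts G. z \<in> verts (R u)"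
  unfolding vH by blast

lemma cnbhH_sub: assumes "z \<in> verts H" shows "cnbh H z \<subseteq> verts H"
proof -
  obtain u where u: "u \<in> verts G" "z \<in> verts (R u)" using inH assms by blast
  have "Nb u \<subseteq> verts H" unfolding Nb_def vH using eG by blast
  moreover have "cnbh (R u) z \<subseteq> verts H" using cnbhR_sub[OF u] u unfolding vH by blast
  ultimately show ?thesis using cnbhH[OF u] by blast
qed

lemma dsetH_sub: "set L \<subseteq> verts H \<Longrightarrow> dset H L \<subseteq> verts H"
  using cnbhH_sub unfolding dset_def by blast

end

lemma first_in_mem: "set S \<inter> A \<noteq> {} \<Longrightarrow> first_in S A \<in> set S \<and> first_in S A \<in> A"
proof -
  assume "set S \<inter> A \<noteq> {}"
  then have "filter (\<lambda>x. x \<in> A) S \<noteq> []" by (auto simp: filter_empty_conv)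
  then have "hd (filter (\<lambda>x. x \<in> A) S) \<in> set (filter (\<lambda>x. x \<in> A) S)" by (rule list.set_sel(1))
  then show ?thesis unfolding first_in_def by simp
qed

context xj
begin

definition good :: "'b list \<Rightarrow> 'a \<Rightarrow> bool" where
  "good S v \<longleftrightarrow> (set S \<inter> verts (R v) \<noteq> {}
        \<and> first_in S (verts (R v)) \<in> self_footprinters H S
      \<longrightarrow> (\<forall>w\<in>verts (R v). footprinter H S w \<in> verts (R v))
        \<and> card (set S \<inter> verts (R v)) = grundy_dom_num (R v))"

lemma lift: "v \<in> verts G \<Longrightarrow> lg (R v) (C \<inter> verts (R v)) L \<Longrightarrow> set L \<subseteq> verts (R v) \<Longrightarrow> lg H C L"
proof (induction L arbitrary: C)
  case Nil then show ?case by simp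
next
  case (Cons z zs)
  have z: "z \<in> verts (R v)" using Cons.prems by simp
  have c: "cnbh H z = cnbh (R v) z \<union> Nb v" using cnbhH[OF Cons.prems(1) z] .
  have s: "cnbh (R v) z \<subseteq> verts (R v)" using cnbhR_sub[OF Cons.prems(1) z] .
  have nd: "Nb v \<inter> verts (R v) = {}" using Nb_disj[OF Cons.prems(1)] .
  have "\<not> cnbh H z \<subseteq> C" using Cons.prems(2) c s by auto
  moreover have "(C \<union> cnbh H z) \<inter> verts (R v) = C \<inter> verts (R v) \<union> cnbh (R v) z"
    using c s nd by auto
  then have "lg H (C \<union> cnbh H z) zs" using Cons by simp
  ultimately show ?case by simp
qed

lemma step:
  assumes S: "grundy_dom_seq H S" and v: "v \<in> verts G" and bad: "\<not> good S v"
  shows "\<exists>S2. grundy_dom_seq H S2 \<and> good S2 v \<and> (\<forall>v'\<in>verts G. good S v' \<longrightarrow> good S2 v')"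
proof -
  define Vv where "Vv = verts (R v)"
  have legS: "set S \<subseteq> verts H" "dset H S = verts H" "lg H {} S"
    using S by (auto simp: grundy_dom_seq_def legal_iff)
  from bad have ne: "set S \<inter> Vv \<noteq> {}" and sf: "first_in S Vv \<in> self_footprinters H S"
    unfolding good_def Vv_def by auto
  from ne have "\<exists>z\<in>set S. z \<in> Vv" by blast
  then obtain pre x rest where Sd: "S = pre @ x # rest" and xV: "x \<in> Vv" and preV: "\<forall>z\<in>set pre. z \<notin> Vv"
    by (rule split_list_first_propE)
  have "filter (\<lambda>z. z \<in> Vv) pre = []" using preV by (simp add: filter_empty_conv)
  then have fx: "first_in S Vv = x" unfolding first_in_def Sd using xV by simp
  have xH: "x \<in> verts H" using legS Sd by auto
  have preH: "set pre \<subseteq> verts H" and restH: "set rest \<subseteq> verts H" using legS Sd by auto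
  have fpx: "footprinter H S x = x" using sf fx by (simp add: self_footprinters_def)
  have fpxe: "footprinter H S x = hd (filter (\<lambda>z. x \<in> cnbh H z) S)" using fp_eq legS xH by metis
  have xpre: "x \<notin> dset H pre"
  proof
    assume "x \<in> dset H pre"
    then have "\<exists>z\<in>set pre. x \<in> cnbh H z" by (auto simp: dset_def)
    then obtain a y b where pd: "pre = a @ y # b" "x \<in> cnbh H y" "\<forall>z\<in>set a. x \<notin> cnbh H z"
      by (rule split_list_first_propE)
    have "hd (filter (\<lambda>z. x \<in> cnbh H z) S) = y" using pd Sd by simp
    then have "y = x" using fpx fpxe by simp
    then show False using pd preV xV by auto
  qed
  have NbV: "Nb v \<inter> Vv = {}" using Nb_disj[OF v] Vv_def by simp
  have preC: "\<forall>z\<in>set pre. cnbh H z \<inter> Vv = {}"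
  proof
    fix z assume z: "z \<in> set pre"
    obtain u where u: "u \<in> verts G" "z \<in> verts (R u)" using inH preH z by blast
    have "u \<noteq> v" using u z preV Vv_def by auto
    from cross[OF u(1) v this u(2)] have c: "cnbh H z \<inter> Vv = (if (v,u)\<in>edges G then Vv else {})"
      by (simp add: Vv_def)
    moreover have "x \<notin> cnbh H z" using xpre z by (auto simp: dset_def)
    ultimately show "cnbh H z \<inter> Vv = {}" using xV by (auto split: if_splits)
  qed
  have preNb: "\<forall>z\<in>set pre. z \<notin> Nb v"
  proof (intro ballI notI)
    fix z assume z: "z \<in> set pre" "z \<in> Nb v"
    then obtain u where u: "(v,u) \<in> edges G" "z \<in> verts (R u)" by (auto simp: Nb_iff)
    have "u \<in> verts G" "u \<noteq> v" using eG u by auto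
    from cross[OF this(1) v this(2) u(2)] u have "cnbh H z \<inter> Vv = Vv" by (simp add: Vv_def)
    then show False using preC z xV by auto
  qed
  have dpre: "dset H pre \<inter> Vv = {}" using preC by (auto simp: dset_def)
  obtain D where D: "legal_dom_seq (R v) D" "length D = grundy_dom_num (R v)"
    and gmax: "\<forall>L. lg (R v) {} L \<longrightarrow> set L \<subseteq> Vv \<longrightarrow> length L \<le> grundy_dom_num (R v)"
    using gdn[of "R v"] gR v unfolding Vv_def by blast
  have Dl: "set D \<subseteq> Vv" "dset (R v) D = Vv" "lg (R v) {} D" "distinct D"
    using D(1) lg_distinct unfolding legal_iff Vv_def by blast+
  have Dne: "D \<noteq> []" using Dl(2) xV by auto
  have cD: "\<forall>d\<in>set D. cnbh H d = cnbh (R v) d \<union> Nb v" using cnbhH v Dl(1) Vv_def by auto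
  have dD: "dset H D = Vv \<union> Nb v"
  proof -
    have "dset H D = (\<Union>d\<in>set D. cnbh (R v) d \<union> Nb v)" using cD unfolding dset_def by simp
    also have "\<dots> = dset (R v) D \<union> Nb v" using Dne unfolding dset_def by auto
    finally show ?thesis using Dl(2) by simp
  qed
  have cx: "cnbh H x = cnbh (R v) x \<union> Nb v" using cnbhH v xV Vv_def by auto
  have cxV: "cnbh (R v) x \<subseteq> Vv" using cnbhR_sub v xV Vv_def by auto
  define A where "A = dset H pre \<union> cnbh H x"
  define B where "B = dset H pre \<union> dset H D"
  have AB: "A - Vv = B - Vv" unfolding A_def B_def using cx cxV NbV dD by auto
  have VB: "Vv \<subseteq> B" unfolding B_def using dD by auto
  have NbA: "Nb v \<subseteq> A" unfolding A_def using cx by auto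
  define K where "K = kf H Vv A rest"
  define S2 where "S2 = pre @ D @ K"
  have lgpre: "lg H {} pre" and lgrest: "lg H A rest"
    using legS(3) unfolding Sd A_def by (auto simp: lg_append)
  have lgD: "lg H (dset H pre) D"
    using lift[OF v, of "dset H pre" D] dpre Dl(1,3) Vv_def by auto
  have lgK: "lg H B K" unfolding K_def using kf_lg[OF lgrest AB VB] .
  have lgS2: "lg H {} S2" unfolding S2_def using lgpre lgD lgK by (simp add: lg_append B_def)
  have setK: "set K \<subseteq> set rest" unfolding K_def by (rule kf_set)
  have VvH: "Vv \<subseteq> verts H" using v unfolding Vv_def vH by blast
  have S2H: "set S2 \<subseteq> verts H" unfolding S2_def using preH Dl(1) VvH setK restH by auto
  have domS2: "dset H S2 = verts H"
  proof
    show "dset H S2 \<subseteq> verts H" using dsetH_sub[OF S2H] .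
    have "verts H = A \<union> dset H rest" using legS(2) unfolding Sd A_def by auto
    also have "\<dots> \<subseteq> B \<union> dset H K" unfolding K_def using kf_dom[OF AB VB] .
    also have "\<dots> = dset H S2" unfolding S2_def B_def by auto
    finally show "verts H \<subseteq> dset H S2" .
  qed
  have legS2: "legal_dom_seq H S2" using S2H domS2 lgS2 by (simp add: legal_iff)
  have "\<exists>E'. lg (R v) {} E' \<and> set E' \<subseteq> Vv \<and> length E' + length K = length [x] + length rest"
    unfolding K_def
  proof (rule kf_count[where N = "Nb v"])
    show "lg H A rest" by (rule lgrest)
    show "lg (R v) {} [x]" using cnbh_self[of x "R v"] by auto
    show "dset (R v) [x] \<subseteq> A \<inter> Vv" using cx cxV unfolding A_def by auto
    show "set [x] \<subseteq> Vv" using xV by simp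
    show "Nb v \<subseteq> A" by (rule NbA)
    show "Nb v \<inter> Vv = {}" by (rule NbV)
    show "\<forall>z\<in>set rest. z \<in> Vv \<longrightarrow> cnbh H z = cnbh (R v) z \<union> Nb v"
      using cnbhH v Vv_def by auto
    show "\<forall>z\<in>Vv. cnbh (R v) z \<subseteq> Vv" using cnbhR_sub v Vv_def by auto
    show "\<forall>z\<in>set rest. z \<notin> Vv \<longrightarrow> cnbh H z \<inter> Vv \<noteq> {} \<longrightarrow> Vv \<subseteq> cnbh H z"
    proof (intro ballI impI)
      fix z assume z: "z \<in> set rest" "z \<notin> Vv" "cnbh H z \<inter> Vv \<noteq> {}"
      obtain u where u: "u \<in> verts G" "z \<in> verts (R u)" using inH restH z by blast
      have "u \<noteq> v" using u z Vv_def by auto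
      from cross[OF u(1) v this u(2)] z(3) show "Vv \<subseteq> cnbh H z"
        by (auto simp: Vv_def split: if_splits)
    qed
  qed
  then obtain E' where E': "lg (R v) {} E'" "set E' \<subseteq> Vv" "length E' + length K = 1 + length rest"
    by auto
  have "length E' \<le> length D" using gmax E' D(2) by auto
  then have lenS2: "length S \<le> length S2" using E'(3) unfolding S2_def Sd by simp
  have gS2: "grundy_dom_seq H S2"
    using S legS2 lenS2 unfolding grundy_dom_seq_def by (meson le_trans)
  have fp2: "footprinter H S2 w = hd (filter (\<lambda>z. w \<in> cnbh H z) S2)" if "w \<in> verts H" for w
    using fp_eq domS2 that by metis
  have fp1: "footprinter H S w = hd (filter (\<lambda>z. w \<in> cnbh H z) S)" if "w \<in> verts H" for w
    using fp_eq legS(2) that by metis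
  have KV: "\<forall>z\<in>set K. z \<notin> Vv"
  proof (intro ballI notI)
    fix z assume z: "z \<in> set K" "z \<in> Vv"
    have "\<not> cnbh H z \<subseteq> A \<union> Vv" using z kf_mem unfolding K_def by metis
    moreover have "cnbh H z = cnbh (R v) z \<union> Nb v" using cnbhH v z Vv_def by auto
    moreover have "cnbh (R v) z \<subseteq> Vv" using cnbhR_sub v z Vv_def by auto
    ultimately show False using NbA by auto
  qed
  have S2V: "set S2 \<inter> Vv = set D" using preV KV Dl(1) unfolding S2_def by auto
  have goodv: "good S2 v"
  proof -
    have "card (set S2 \<inter> Vv) = grundy_dom_num (R v)" using S2V Dl(4) D(2) by (simp add: distinct_card)
    moreover have "footprinter H S2 w \<in> Vv" if w: "w \<in> Vv" for w
    proof -
      let ?P = "\<lambda>z. w \<in> cnbh H z"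
      have "filter ?P pre = []" using preC w by (auto simp: filter_empty_conv)
      moreover have "filter ?P D \<noteq> []"
      proof -
        have "w \<in> dset (R v) D" using Dl(2) w by simp
        then obtain d where "d \<in> set D" "w \<in> cnbh (R v) d" by (auto simp: dset_def)
        then show ?thesis using cD by (auto simp: filter_empty_conv)
      qed
      ultimately have "hd (filter ?P S2) = hd (filter ?P D)" unfolding S2_def by simp
      moreover have "hd (filter ?P D) \<in> set D" using \<open>filter ?P D \<noteq> []\<close>
        by (meson filter_is_subset list.set_sel(1) subsetD)
      moreover have "footprinter H S2 w = hd (filter ?P S2)" using fp2 w VvH by blast
      ultimately show ?thesis using Dl(1) by (metis subsetD)
    qed
    ultimately show ?thesis unfolding good_def Vv_def by auto
  qed
  have pres: "good S2 v'" if v': "v' \<in> verts G" "good S v'" for v'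
  proof -
    define Vw where "Vw = verts (R v')"
    consider "v' = v" | "(v,v') \<in> edges G" | "v' \<noteq> v" "(v,v') \<notin> edges G" by blast
    then show ?thesis
    proof cases
      case 1 then show ?thesis using goodv by simp
    next
      case 2
      have "\<not> (set S2 \<inter> Vw \<noteq> {} \<and> first_in S2 Vw \<in> self_footprinters H S2)"
      proof
        assume asm: "set S2 \<inter> Vw \<noteq> {} \<and> first_in S2 Vw \<in> self_footprinters H S2"
        define a where "a = first_in S2 Vw"
        have a: "a \<in> set S2" "a \<in> Vw" using first_in_mem[of S2 Vw] asm unfolding a_def by simp_all
        have aNb: "a \<in> Nb v" using a(2) 2 unfolding Vw_def by (auto simp: Nb_iff)
        have aH: "a \<in> verts H" using a S2H by auto
        have fa: "footprinter H S2 a = a" using asm a_def aH by (simp add: self_footprinters_def)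
        let ?P = "\<lambda>z. a \<in> cnbh H z"
        show False
        proof (cases "filter ?P pre = []")
          case True
          have "filter ?P D = D" using cD aNb by simp
          then have "hd (filter ?P S2) = hd D" using True Dne unfolding S2_def by simp
          moreover have "hd D \<in> Vv" using Dne Dl(1) by auto
          ultimately show False using fa fp2[OF aH] aNb NbV by auto
        next
          case False
          then have "hd (filter ?P S2) = hd (filter ?P pre)" unfolding S2_def by simp
          moreover have "hd (filter ?P pre) \<in> set pre" using False
            by (meson filter_is_subset list.set_sel(1) subsetD)
          ultimately show False using fa fp2[OF aH] aNb preNb by auto
        qed
      qed
      then show ?thesis unfolding good_def Vw_def by blast
    next
      case 3
      have VwV: "Vw \<inter> Vv = {}" using disj v' v 3 unfolding Vw_def Vv_def by blast
      have VwNb: "Vw \<inter> Nb v = {}"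
      proof (rule ccontr)
        assume "Vw \<inter> Nb v \<noteq> {}"
        then obtain y u where "y \<in> Vw" "(v,u) \<in> edges G" "y \<in> verts (R u)" by (auto simp: Nb_iff)
        moreover then have "u = v'" using uniq eG v' unfolding Vw_def by blast
        ultimately show False using 3 by simp
      qed
      have cw: "\<forall>z\<in>set rest. z \<in> Vw \<longrightarrow> cnbh H z \<inter> Vv = {}"
        using cross[OF v'(1) v 3(1)] 3(2) unfolding Vw_def Vv_def by auto
      have filt: "filter (\<lambda>z. z \<in> Vw) S2 = filter (\<lambda>z. z \<in> Vw) S"
      proof -
        have "filter (\<lambda>z. z \<in> Vw) D = []" using Dl(1) VwV by (auto simp: filter_empty_conv)
        moreover have "filter (\<lambda>z. z \<in> Vw) K = filter (\<lambda>z. z \<in> Vw) rest"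
          unfolding K_def using kf_filter[OF lgrest cw] .
        moreover have "x \<notin> Vw" using xV VwV by auto
        ultimately show ?thesis unfolding S2_def Sd by simp
      qed
      have setw: "set S2 \<inter> Vw = set S \<inter> Vw"
      proof -
        have "set (filter (\<lambda>z. z \<in> Vw) S2) = set (filter (\<lambda>z. z \<in> Vw) S)" using filt by simp
        then show ?thesis by auto
      qed
      have fiw: "first_in S2 Vw = first_in S Vw" unfolding first_in_def using filt by simp
      have fpw: "footprinter H S2 w = footprinter H S w" if w: "w \<in> Vw" for w
      proof -
        have wH: "w \<in> verts H" using w v' unfolding Vw_def vH by blast
        have wV: "w \<notin> Vv" and wN: "w \<notin> Nb v" using w VwV VwNb by auto
        let ?P = "\<lambda>z. w \<in> cnbh H z"
        show ?thesis
        proof (cases "filter ?P pre = []")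
          case False
          then show ?thesis using fp1[OF wH] fp2[OF wH] unfolding S2_def Sd by simp
        next
          case True
          have "filter ?P D = []"
          proof -
            have "\<not> ?P d" if "d \<in> set D" for d
              using cD Dl(1) cnbhR_sub[OF v, of d] wV wN Vv_def that by blast
            then show ?thesis by (simp add: filter_empty_conv)
          qed
          then have e2: "hd (filter ?P S2) = hd (filter ?P K)" using True unfolding S2_def by simp
          have "w \<notin> cnbh H x" using cx cxV wV wN by auto
          then have e1: "hd (filter ?P S) = hd (filter ?P rest)" using True unfolding Sd by simp
          have "w \<notin> dset H pre" using True by (auto simp: filter_empty_conv dset_def)
          then have "w \<notin> A" using \<open>w \<notin> cnbh H x\<close> unfolding A_def by auto
          then have "hd (filter ?P K) = hd (filter ?P rest)" unfolding K_def using kf_hd wV by metis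
          then show ?thesis using e1 e2 fp1[OF wH] fp2[OF wH] by simp
        qed
      qed
      have sfw: "first_in S2 Vw \<in> self_footprinters H S2 \<longleftrightarrow> first_in S Vw \<in> self_footprinters H S"
        if "set S \<inter> Vw \<noteq> {}"
      proof -
        have "first_in S Vw \<in> Vw" using first_in_mem[of S Vw] that by simp
        then show ?thesis using fiw fpw unfolding self_footprinters_def by simp
      qed
      show ?thesis using v'(2) setw fiw fpw sfw unfolding good_def Vw_def[symmetric] by auto
    qed
  qed
  show ?thesis using gS2 goodv pres by blast
qed

lemma all_good:
  assumes "grundy_dom_seq H S"
  shows "\<exists>S'. grundy_dom_seq H S' \<and> (\<forall>v\<in>verts G. good S' v)"
  using assms
proof (induction "card {v\<in>verts G. \<not> good S v}" arbitrary: S rule: less_induct)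
  case less
  show ?case
  proof (cases "\<forall>v\<in>verts G. good S v")
    case True then show ?thesis using less.prems by blast
  next
    case False
    then obtain v where v: "v \<in> verts G" "\<not> good S v" by blast
    obtain S2 where S2: "grundy_dom_seq H S2" "good S2 v" "\<forall>v'\<in>verts G. good S v' \<longrightarrow> good S2 v'"
      using step[OF less.prems v] by blast
    have fin: "finite {v\<in>verts G. \<not> good S v}" using gG by (simp add: graph_def)
    have "{v\<in>verts G. \<not> good S2 v} \<subset> {v\<in>verts G. \<not> good S v}"
      using S2 v by blast
    then have "card {v\<in>verts G. \<not> good S2 v} < card {v\<in>verts G. \<not> good S v}"
      using fin by (rule psubset_card_mono[rotated])
    then show ?thesis using less.hyps S2(1) by blast
  qed
qed

end


theorem lemma2:
  fixes G :: "'a graph" and R :: "'a \<Rightarrow> 'b graph" and S :: "'b list"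
  assumes "graph G"
    and "\<forall>v\<in>verts G. graph (R v)"
    and "\<forall>u\<in>verts G. \<forall>v\<in>verts G. u \<noteq> v \<longrightarrow> verts (R u) \<inter> verts (R v) = {}"
    and "grundy_dom_seq (xjoin G R) S"
  shows "\<exists>S'. grundy_dom_seq (xjoin G R) S' \<and>
    (\<forall>v\<in>verts G. set S' \<inter> verts (R v) \<noteq> {}
        \<and> first_in S' (verts (R v)) \<in> self_footprinters (xjoin G R) S'
      \<longrightarrow> (\<forall>w\<in>verts (R v). footprinter (xjoin G R) S' w \<in> verts (R v))
        \<and> card (set S' \<inter> verts (R v)) = grundy_dom_num (R v))"
proof -
  interpret xj G R using assms(1-3) by unfold_locales
  obtain S' where "grundy_dom_seq (xjoin G R) S'" "\<forall>v\<in>verts G. good S' v"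
    using all_good[OF assms(4)] by blast
  then show ?thesis unfolding good_def by blast
qed

end
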